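(* Consider the following network model. Let $q$ be a prime power, $K\ge1$, $L\ge1$, $N_{\mathrm S}\ge K$, $N_{\mathrm R}\ge1$. A source S draws $N_{\mathrm S}$ coefficient vectors i.i.d. uniformly from $\mathbb{F}_q^K$ and broadcasts one packet per vector. Each transmitted packet is erased on the link S$\to$D with probability $\epsilon_{\mathrm{SD}}$ and on the link S$\to\mathrm R_j$ with probability $\epsilon_{\mathrm{SR}_j}$ ($j=1,\dots,L$), all erasures independent across links and packets and independent of the coefficients. Relay $\mathrm R_j$, having received $m_j$ packets with coefficient matrix $\mathbf{C}_{\mathrm S\to\mathrm R_j}\in\mathbb{F}_q^{m_j\times K}$, draws $\mathbf{G}_j\in\mathbb{F}_q^{N_{\mathrm R}\times m_j}$ with i.i.d. uniform entries and transmits the $N_{\mathrm R}$ rows of $\mathbf{G}_j\mathbf{C}_{\mathrm S\to\mathrm R_j}$ to D, each independently erased with probability $\epsilon_{\mathrm R_j\mathrm D}$. D stacks all coefficient vectors it received into $\mathbf{C}_{\mathrm D}$; decoding succeeds iff $\operatorname{rank}(\mathbf{C}_{\mathrm D})=K$, and $P^{(L)}_{\mathrm R}$ is its probability. Then $$P^{(L)}_{\mathrm R}\le P(N_{\mathrm S},\tilde\epsilon),\qquad \tilde\epsilon=\epsilon_{\mathrm{SD}}\prod_{j=1}^L\epsilon_{\mathrm{SR}_j},$$ where $P(N,\epsilon)=\sum_{k=K}^{N}\binom{N}{k}(1-\epsilon)^k\epsilon^{N-k}\prod_{i=0}^{K-1}\left(1-q^{i-k}\right)$.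
   Context: $P(N,\epsilon)$ is the probability that, of $N$ packets carrying i.i.d. uniform coefficient vectors in $\mathbb{F}_q^K$, each independently erased with probability $\epsilon$, the received ones have rank $K$. *)

theory Defs
  imports "HOL-Probability.Product_PMF" "Jordan_Normal_Form.DL_Rank"
begin

definition P_decode :: "nat \<Rightarrow> nat \<Rightarrow> nat \<Rightarrow> real \<Rightarrow> real" where
  "P_decode q K N eps =
     (\<Sum>k=K..N. real (N choose k) * (1 - eps) ^ k * eps ^ (N - k) *
        (\<Prod>i<K. 1 - real q powi (int i - int k)))"

definition mat_rank :: "'a::field mat \<Rightarrow> nat" where
  "mat_rank A = vec_space.rank (dim_row A) A"

text \<open>A Bernoulli outcome True means "packet received" (probability 1 - erasure prob.).\<close>
definition relay_success_pmf ::
  "'a::{field,finite} itself \<Rightarrow> nat \<Rightarrow> nat \<Rightarrow> nat \<Rightarrow> nat \<Rightarrow> real \<Rightarrow>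
   (nat \<Rightarrow> real) \<Rightarrow> (nat \<Rightarrow> real) \<Rightarrow> bool pmf" where
  "relay_success_pmf ty K L NS NR eSD eSR eRD =
    bind_pmf (Pi_pmf {..<NS} (0\<^sub>v K) (\<lambda>_. pmf_of_set (carrier_vec K :: 'a vec set))) (\<lambda>C.
    bind_pmf (Pi_pmf {..<NS} False (\<lambda>_. bernoulli_pmf (1 - eSD))) (\<lambda>rSD.
    bind_pmf (Pi_pmf ({..<L} \<times> {..<NS}) False (\<lambda>(j,i). bernoulli_pmf (1 - eSR j))) (\<lambda>rSR.
    let CR = (\<lambda>j. mat_of_rows K (map C (filter (\<lambda>i. rSR (j, i)) [0..<NS]))) in
    bind_pmf (Pi_pmf {..<L} (0\<^sub>m 0 0) (\<lambda>j. pmf_of_set (carrier_mat NR (dim_row (CR j)) :: 'a mat set))) (\<lambda>G.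
    bind_pmf (Pi_pmf ({..<L} \<times> {..<NR}) False (\<lambda>(j,r). bernoulli_pmf (1 - eRD j))) (\<lambda>rRD.
    let rowsD = map C (filter rSD [0..<NS]) @
                concat (map (\<lambda>j. map (\<lambda>r. row (G j * CR j) r) (filter (\<lambda>r. rRD (j, r)) [0..<NR])) [0..<L]);
        CD = mat_of_rows K rowsD
    in return_pmf (mat_rank CD = K))))))"

end

theory Submission
  imports Defs
begin


definition Vc :: "nat set \<Rightarrow> (nat \<Rightarrow> 'a::zero) set" where
  "Vc S = PiE_dflt S 0 (\<lambda>_. UNIV)"
definition Cols :: "nat set \<Rightarrow> nat \<Rightarrow> (nat \<Rightarrow> nat \<Rightarrow> 'a::zero) set" where
  "Cols S m = PiE_dflt {..<m} (\<lambda>_. 0) (\<lambda>_. Vc S)"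
definition LI :: "nat set \<Rightarrow> nat \<Rightarrow> (nat \<Rightarrow> nat \<Rightarrow> 'a::field) \<Rightarrow> bool" where
  "LI S m cl = (\<forall>x. (\<forall>i\<in>S. (\<Sum>t<m. x t * cl t i) = 0) \<longrightarrow> (\<forall>t<m. x t = 0))"
definition lc :: "nat set \<Rightarrow> nat \<Rightarrow> (nat \<Rightarrow> nat \<Rightarrow> 'a::field) \<Rightarrow> (nat \<Rightarrow> 'a) \<Rightarrow> (nat \<Rightarrow> 'a)" where
  "lc S m cl x = (\<lambda>i. if i \<in> S then (\<Sum>t<m. x t * cl t i) else 0)"

lemma finite_Vc[simp]: "finite S \<Longrightarrow> finite (Vc S :: (nat \<Rightarrow> 'b::{zero,finite}) set)"
  unfolding Vc_def by (intro finite_PiE_dflt) auto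

lemma card_Vc: "finite S \<Longrightarrow> card (Vc S :: (nat \<Rightarrow> 'a::{zero,finite}) set) = CARD('a) ^ card S"
  unfolding Vc_def by (subst card_PiE_dflt) auto

lemma finite_Cols[simp]: "finite S \<Longrightarrow> finite (Cols S m :: (nat \<Rightarrow> nat \<Rightarrow> 'a::{zero,finite}) set)"
  unfolding Cols_def by (intro finite_PiE_dflt) auto

lemma card_Cols: "finite S \<Longrightarrow> card (Cols S m :: (nat \<Rightarrow> nat \<Rightarrow> 'a::{zero,finite}) set) = (CARD('a) ^ card S) ^ m"
  unfolding Cols_def by (subst card_PiE_dflt) (auto simp: card_Vc)

lemma lc_in: "lc S m cl x \<in> Vc S"
  unfolding lc_def Vc_def PiE_dflt_def by auto

lemma lc_inj:
  assumes "LI S m cl"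
  shows "inj_on (lc S m cl) (Vc {..<m})"
proof (rule inj_onI)
  fix x y assume x: "x \<in> Vc {..<m}" and y: "y \<in> Vc {..<m}" and e: "lc S m cl x = lc S m cl y"
  have "\<forall>i\<in>S. (\<Sum>t<m. (x t - y t) * cl t i) = 0"
  proof
    fix i assume i: "i \<in> S"
    have "(\<Sum>t<m. x t * cl t i) = (\<Sum>t<m. y t * cl t i)"
      using fun_cong[OF e, of i] i unfolding lc_def by simp
    then show "(\<Sum>t<m. (x t - y t) * cl t i) = 0"
      by (simp add: algebra_simps sum_subtractf)
  qed
  then have "\<forall>t<m. x t - y t = 0" using spec[OF assms[unfolded LI_def], of "\<lambda>t. x t - y t"]
    by blast
  show "x = y"
  proof (rule ext)
    fix t show "x t = y t"
      using \<open>\<forall>t<m. x t - y t = 0\<close> x y unfolding Vc_def PiE_dflt_def by (cases "t < m") auto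
  qed
qed

lemma card_span:
  assumes "LI S m cl" "finite S"
  shows "card (lc S m cl ` Vc {..<m} :: (nat \<Rightarrow> 'a::{field,finite}) set) = CARD('a) ^ m"
  using card_image[OF lc_inj[OF assms(1)]] card_Vc[of "{..<m}"] by simp

lemma span_le:
  fixes cl :: "nat \<Rightarrow> nat \<Rightarrow> 'a::{field,finite}"
  assumes "LI S m cl" "finite S"
  shows "CARD('a) ^ m \<le> CARD('a) ^ card S"
proof -
  have "lc S m cl ` Vc {..<m} \<subseteq> (Vc S :: (nat \<Rightarrow> 'a) set)" using lc_in by blast
  then have "card (lc S m cl ` Vc {..<m}) \<le> card (Vc S :: (nat \<Rightarrow> 'a) set)"
    using assms(2) by (intro card_mono) auto
  moreover have "card (Vc S :: (nat \<Rightarrow> 'a) set) = CARD('a) ^ card S" by (rule card_Vc[OF assms(2)])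
  ultimately show ?thesis using card_span[OF assms] by simp
qed

lemma LI_upd:
  fixes cl :: "nat \<Rightarrow> nat \<Rightarrow> 'a::field"
  shows "LI S m (cl(m := c)) = LI S m cl"
proof -
  have "(\<Sum>t<m. x t * (cl(m:=c)) t i) = (\<Sum>t<m. x t * cl t i)" for x i
    by (rule sum.cong) auto
  then show ?thesis unfolding LI_def by simp
qed

lemma LI_Suc_mono:
  fixes cl :: "nat \<Rightarrow> nat \<Rightarrow> 'a::field"
  assumes H: "LI S (Suc m) cl"
  shows "LI S m cl"
proof -
  have "\<forall>t<m. x t = 0" if h: "\<forall>i\<in>S. (\<Sum>t<m. x t * cl t i) = 0" for x
  proof -
    have "\<forall>i\<in>S. (\<Sum>t<Suc m. (x(m:=0)) t * cl t i) = 0"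
      using h by (auto intro: trans[OF sum.cong[OF refl]])
    then have "\<forall>t<Suc m. (x(m:=0)) t = 0" using H unfolding LI_def by blast
    then show "\<forall>t<m. x t = 0" by (metis fun_upd_apply less_SucI less_irrefl_nat)
  qed
  then show ?thesis unfolding LI_def by blast
qed

lemma LI_Suc:
  assumes LI: "LI S m cl" and c: "c \<in> Vc S"
  shows "LI S (Suc m) (cl(m := c)) \<longleftrightarrow> c \<notin> lc S m cl ` Vc {..<m}"
proof
  assume L: "LI S (Suc m) (cl(m := c))"
  show "c \<notin> lc S m cl ` Vc {..<m}"
  proof
    assume "c \<in> lc S m cl ` Vc {..<m}"
    then obtain y where y: "y \<in> Vc {..<m}" and cy: "c = lc S m cl y" by blast
    define x where "x = y(m := -1)"
    have "\<forall>i\<in>S. (\<Sum>t<Suc m. x t * (cl(m := c)) t i) = 0"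
    proof
      fix i assume i: "i \<in> S"
      have "(\<Sum>t<Suc m. x t * (cl(m := c)) t i) = (\<Sum>t<m. y t * cl t i) - c i"
        unfolding x_def by (simp add: sum.lessThan_Suc)
      also have "\<dots> = 0" using i cy unfolding lc_def by simp
      finally show "(\<Sum>t<Suc m. x t * (cl(m := c)) t i) = 0" .
    qed
    then have "\<forall>t<Suc m. x t = 0" using L unfolding LI_def by blast
    then show False unfolding x_def by auto
  qed
next
  assume nc: "c \<notin> lc S m cl ` Vc {..<m}"
  show "LI S (Suc m) (cl(m := c))"
    unfolding LI_def
  proof (rule allI, rule impI)
    fix x :: "nat \<Rightarrow> 'a"
    assume h: "\<forall>i\<in>S. (\<Sum>t<Suc m. x t * (cl(m := c)) t i) = 0"
    have h2: "(\<Sum>t<m. x t * cl t i) + x m * c i = 0" if "i \<in> S" for i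
      using h that by (simp add: sum.lessThan_Suc)
    show "\<forall>t<Suc m. x t = 0"
    proof (cases "x m = 0")
      case True
      then have "\<forall>i\<in>S. (\<Sum>t<m. x t * cl t i) = 0" using h2 by simp
      then have "\<forall>t<m. x t = 0" using LI unfolding LI_def by blast
      then show ?thesis using True less_Suc_eq by auto
    next
      case False
      define y where "y = (\<lambda>t. if t < m then - x t / x m else 0)"
      have y: "y \<in> Vc {..<m}" unfolding y_def Vc_def PiE_dflt_def by auto
      have "lc S m cl y = c"
      proof
        fix i show "lc S m cl y i = c i"
        proof (cases "i \<in> S")
          case True
          have "lc S m cl y i = (\<Sum>t<m. (- x t / x m) * cl t i)"
            unfolding lc_def y_def using True by (auto intro: sum.cong)
          also have "\<dots> = (\<Sum>t<m. - (x t * cl t i)) / x m"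
            by (simp add: sum_divide_distrib)
          also have "\<dots> = - (\<Sum>t<m. x t * cl t i) / x m"
            by (simp only: sum_negf)
          also have "(\<Sum>t<m. x t * cl t i) = - (x m * c i)"
            using h2[OF True] by (simp add: eq_neg_iff_add_eq_0)
          also have "- (- (x m * c i)) / x m = c i" using False by simp
          finally show ?thesis .
        next
          case False
          then show ?thesis using c unfolding lc_def Vc_def PiE_dflt_def by auto
        qed
      qed
      then show ?thesis using nc y by blast
    qed
  qed
qed


lemma Cols_Suc:
  "(Cols S (Suc m) :: (nat \<Rightarrow> nat \<Rightarrow> 'a::zero) set) = (\<lambda>(cl, c). cl(m := c)) ` (Cols S m \<times> Vc S)"
proof (rule Set.set_eqI)
  fix cl' :: "nat \<Rightarrow> nat \<Rightarrow> 'a"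
  show "cl' \<in> Cols S (Suc m) \<longleftrightarrow> cl' \<in> (\<lambda>(cl, c). cl(m := c)) ` (Cols S m \<times> Vc S)"
  proof
    assume h: "cl' \<in> Cols S (Suc m)"
    have "cl'(m := (\<lambda>_. 0)) \<in> Cols S m" "cl' m \<in> Vc S"
      using h unfolding Cols_def PiE_dflt_def by auto
    moreover have "cl' = (\<lambda>(cl, c). cl(m := c)) (cl'(m := (\<lambda>_. 0)), cl' m)" by simp
    ultimately show "cl' \<in> (\<lambda>(cl, c). cl(m := c)) ` (Cols S m \<times> Vc S)" by blast
  next
    assume "cl' \<in> (\<lambda>(cl, c). cl(m := c)) ` (Cols S m \<times> Vc S)"
    then show "cl' \<in> Cols S (Suc m)" unfolding Cols_def PiE_dflt_def by auto
  qed
qed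

lemma inj_Cols_Suc: "inj_on (\<lambda>(cl, c). cl(m := c)) ((Cols S m :: (nat \<Rightarrow> nat \<Rightarrow> 'a::zero) set) \<times> X)"
proof (rule inj_onI, clarify)
  fix cl cl2 :: "nat \<Rightarrow> nat \<Rightarrow> 'a" and c c2 assume h: "cl \<in> Cols S m" "cl2 \<in> Cols S m" "cl(m := c) = cl2(m := c2)"
  have "c = c2" using fun_cong[OF h(3), of m] by simp
  moreover have "cl = cl2"
  proof
    fix t show "cl t = cl2 t"
      using fun_cong[OF h(3), of t] h(1,2) unfolding Cols_def PiE_dflt_def by (cases "t = m") auto
  qed
  ultimately show "cl = cl2 \<and> c = c2" by simp
qed

lemma card_LI:
  fixes S :: "nat set"
  assumes S: "finite S"
  shows "real (card {cl \<in> (Cols S m :: (nat \<Rightarrow> nat \<Rightarrow> 'a::{field,finite}) set). LI S m cl})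
       = (\<Prod>t<m. real CARD('a) ^ card S - real CARD('a) ^ t)"
proof (induction m)
  case 0
  have "Cols S 0 = {(\<lambda>_ _. 0) :: nat \<Rightarrow> nat \<Rightarrow> 'a}" unfolding Cols_def PiE_dflt_def by auto
  moreover have "LI S 0 ((\<lambda>_ _. 0) :: nat \<Rightarrow> nat \<Rightarrow> 'a)" unfolding LI_def by simp
  ultimately have "{cl \<in> (Cols S 0 :: (nat \<Rightarrow> nat \<Rightarrow> 'a) set). LI S 0 cl} = {\<lambda>_ _. 0}" by auto
  then show ?case by simp
next
  case (Suc m)
  define q where "q = CARD('a)"
  define k where "k = card S"
  define G where "G = (\<lambda>m. {cl \<in> (Cols S m :: (nat \<Rightarrow> nat \<Rightarrow> 'a) set). LI S m cl})"
  define F where "F = (\<lambda>cl. {c \<in> (Vc S :: (nat \<Rightarrow> 'a) set). LI S (Suc m) (cl(m := c))})"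
  have pw: "card (F cl) = (if LI S m cl then q ^ k - q ^ m else 0)" if cl: "cl \<in> Cols S m" for cl
  proof (cases "LI S m cl")
    case True
    have "F cl = Vc S - lc S m cl ` Vc {..<m}"
      unfolding F_def using LI_Suc[OF True] by auto
    moreover have "lc S m cl ` Vc {..<m} \<subseteq> Vc S" using lc_in by blast
    ultimately have "card (F cl) = card (Vc S :: (nat \<Rightarrow> 'a) set) - card (lc S m cl ` Vc {..<m})"
      using S by (simp add: card_Diff_subset finite_subset)
    moreover have "card (Vc S :: (nat \<Rightarrow> 'a) set) = CARD('a) ^ card S" by (rule card_Vc[OF S])
    ultimately show ?thesis using True card_span[OF True S] unfolding q_def k_def by simp
  next
    case False
    have "F cl = {}" unfolding F_def using False LI_Suc_mono LI_upd by blast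
    then show ?thesis using False by simp
  qed
  have GS: "G (Suc m) = (\<lambda>(cl, c). cl(m := c)) ` (Sigma (Cols S m) F)"
    unfolding G_def F_def Cols_Suc by auto
  have "card (G (Suc m)) = card (Sigma (Cols S m) F)"
    unfolding GS by (rule card_image, rule inj_on_subset[OF inj_Cols_Suc[of m S UNIV]]) auto
  also have "\<dots> = (\<Sum>cl\<in>Cols S m. card (F cl))"
    using S by (intro card_SigmaI) (auto simp: F_def)
  also have "\<dots> = (\<Sum>cl\<in>(Cols S m :: (nat \<Rightarrow> nat \<Rightarrow> 'a) set). if LI S m cl then q ^ k - q ^ m else 0)"
    using pw by (intro sum.cong refl) auto
  also have "\<dots> = card (G m) * (q ^ k - q ^ m)"
    unfolding G_def using S by (simp add: sum.If_cases Int_def)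
  finally have eq: "card (G (Suc m)) = card (G m) * (q ^ k - q ^ m)" .
  show ?case
  proof (cases "G m = {}")
    case True
    have c0: "card (G m) = 0" using True by simp
    have p0: "(\<Prod>t<m. real q ^ k - real q ^ t) = 0" using Suc.IH c0 unfolding G_def q_def k_def by simp
    have "card (G (Suc m)) = 0" using eq c0 by simp
    then show ?thesis using p0 unfolding G_def q_def k_def by (simp add: prod.lessThan_Suc)
  next
    case False
    then obtain cl where "cl \<in> G m" by blast
    then have "q ^ m \<le> q ^ k" using span_le[of S m cl] S unfolding G_def q_def k_def by auto
    then have "real (q ^ k - q ^ m) = real q ^ k - real q ^ m" by (simp add: of_nat_diff)
    then show ?thesis using Suc.IH eq unfolding G_def q_def k_def by simp
  qed
qed



lemma finite_carrier_vec': "finite (carrier_vec n :: 'a::finite vec set)"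
proof -
  have "carrier_vec n \<subseteq> (\<lambda>f. vec n f) ` (PiE {..<n} (\<lambda>_. (UNIV :: 'a set)))"
  proof
    fix v :: "'a vec" assume v: "v \<in> carrier_vec n"
    have "v = vec n (restrict (\<lambda>i. v $ i) {..<n})"
      using v by (intro eq_vecI) auto
    then show "v \<in> (\<lambda>f. vec n f) ` (PiE {..<n} (\<lambda>_. (UNIV :: 'a set)))" by auto
  qed
  moreover have "finite (PiE {..<n} (\<lambda>_. (UNIV :: 'a set)))" by (intro finite_PiE) auto
  ultimately show ?thesis using finite_subset by blast
qed

lemma finite_carrier_mat': "finite (carrier_mat nr nc :: 'a::finite mat set)"
proof -
  have "carrier_mat nr nc \<subseteq> (\<lambda>f. mat nr nc f) ` (PiE ({..<nr} \<times> {..<nc}) (\<lambda>_. (UNIV :: 'a set)))"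
  proof
    fix A :: "'a mat" assume A: "A \<in> carrier_mat nr nc"
    have "A = mat nr nc (restrict (\<lambda>ij. A $$ ij) ({..<nr} \<times> {..<nc}))"
      using A by (intro eq_matI) auto
    then show "A \<in> (\<lambda>f. mat nr nc f) ` (PiE ({..<nr} \<times> {..<nc}) (\<lambda>_. (UNIV :: 'a set)))" by auto
  qed
  moreover have "finite (PiE ({..<nr} \<times> {..<nc}) (\<lambda>_. (UNIV :: 'a set)))" by (intro finite_PiE) auto
  ultimately show ?thesis using finite_subset by blast
qed

definition FRS :: "nat \<Rightarrow> nat set \<Rightarrow> (nat \<Rightarrow> 'a::field vec) \<Rightarrow> bool" where
  "FRS K S C = (\<forall>x\<in>carrier_vec K. (\<forall>i\<in>S. C i \<bullet> x = 0) \<longrightarrow> x = 0\<^sub>v K)"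

definition colf :: "nat \<Rightarrow> nat set \<Rightarrow> (nat \<Rightarrow> 'a::field vec) \<Rightarrow> nat \<Rightarrow> nat \<Rightarrow> 'a" where
  "colf K S C = (\<lambda>t. if t < K then (\<lambda>i. if i \<in> S then C i $ t else 0) else (\<lambda>_. 0))"

lemma colf_bij:
  "bij_betw (colf K S) (PiE_dflt S (0\<^sub>v K) (\<lambda>_. carrier_vec K) :: (nat \<Rightarrow> 'a::field vec) set) (Cols S K)"
proof (rule bij_betw_imageI)
  show "inj_on (colf K S) (PiE_dflt S (0\<^sub>v K) (\<lambda>_. carrier_vec K) :: (nat \<Rightarrow> 'a::field vec) set)"
  proof (rule inj_onI)
    fix C C' :: "nat \<Rightarrow> 'a vec"
    assume C: "C \<in> PiE_dflt S (0\<^sub>v K) (\<lambda>_. carrier_vec K)" and C': "C' \<in> PiE_dflt S (0\<^sub>v K) (\<lambda>_. carrier_vec K)"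
      and e: "colf K S C = colf K S C'"
    show "C = C'"
    proof
      fix i show "C i = C' i"
      proof (cases "i \<in> S")
        case True
        have "C i $ t = C' i $ t" if "t < K" for t
          using fun_cong[OF fun_cong[OF e, of t], of i] that True unfolding colf_def by simp
        then show ?thesis using C C' True unfolding PiE_dflt_def by (intro eq_vecI) auto
      next
        case False then show ?thesis using C C' unfolding PiE_dflt_def by auto
      qed
    qed
  qed
next
  show "colf K S ` (PiE_dflt S (0\<^sub>v K) (\<lambda>_. carrier_vec K) :: (nat \<Rightarrow> 'a::field vec) set) = Cols S K"
  proof (rule Set.set_eqI, rule iffI)
    fix cl assume "cl \<in> colf K S ` (PiE_dflt S (0\<^sub>v K) (\<lambda>_. carrier_vec K) :: (nat \<Rightarrow> 'a::field vec) set)"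
    then show "cl \<in> Cols S K" unfolding colf_def Cols_def Vc_def PiE_dflt_def by auto
  next
    fix cl :: "nat \<Rightarrow> nat \<Rightarrow> 'a" assume cl: "cl \<in> Cols S K"
    define C where "C = (\<lambda>i. if i \<in> S then vec K (\<lambda>t. cl t i) else 0\<^sub>v K)"
    have "C \<in> PiE_dflt S (0\<^sub>v K) (\<lambda>_. carrier_vec K)" unfolding C_def PiE_dflt_def by auto
    moreover have "colf K S C = cl"
    proof (intro ext)
      fix t i show "colf K S C t i = cl t i"
        using cl unfolding colf_def C_def Cols_def Vc_def PiE_dflt_def by auto
    qed
    ultimately show "cl \<in> colf K S ` (PiE_dflt S (0\<^sub>v K) (\<lambda>_. carrier_vec K))" by blast
  qed
qed

lemma FRS_LI:
  assumes C: "C \<in> PiE_dflt S (0\<^sub>v K) (\<lambda>_. carrier_vec K)"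
  shows "FRS K S (C :: nat \<Rightarrow> 'a::field vec) \<longleftrightarrow> LI S K (colf K S C)"
proof -
  have sp: "C i \<bullet> vec K y = (\<Sum>t<K. y t * colf K S C t i)" if i: "i \<in> S" for i y
    unfolding scalar_prod_def colf_def using i
    by (auto simp: atLeast0LessThan mult.commute intro!: sum.cong)
  show ?thesis
  proof
    assume F: "FRS K S C"
    show "LI S K (colf K S C)" unfolding LI_def
    proof (rule allI, rule impI)
      fix y assume h: "\<forall>i\<in>S. (\<Sum>t<K. y t * colf K S C t i) = 0"
      have "vec K y = 0\<^sub>v K" using F h sp unfolding FRS_def by auto
      then show "\<forall>t<K. y t = 0" by (metis index_vec index_zero_vec(1))
    qed
  next
    assume L: "LI S K (colf K S C)"
    show "FRS K S C" unfolding FRS_def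
    proof (rule ballI, rule impI)
      fix x :: "'a vec" assume x: "x \<in> carrier_vec K" and h: "\<forall>i\<in>S. C i \<bullet> x = 0"
      have xv: "x = vec K (\<lambda>t. x $ t)" using x by (intro eq_vecI) auto
      have "\<forall>i\<in>S. (\<Sum>t<K. x $ t * colf K S C t i) = 0" using h sp xv by metis
      then have "\<forall>t<K. x $ t = 0" using L unfolding LI_def by blast
      then show "x = 0\<^sub>v K" using x by (intro eq_vecI) auto
    qed
  qed
qed

lemma prod_ratio:
  fixes q :: real assumes q: "q > 0"
  shows "(\<Prod>t<K. q ^ k - q ^ t) / (q ^ k) ^ K = (\<Prod>t<K. 1 - q powi (int t - int k))"
proof -
  have "(q ^ k) ^ K = (\<Prod>t<K. q ^ k)" by simp
  then have "(\<Prod>t<K. q ^ k - q ^ t) / (q ^ k) ^ K = (\<Prod>t<K. (q ^ k - q ^ t) / q ^ k)"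
    by (simp add: prod_dividef)
  also have "\<dots> = (\<Prod>t<K. 1 - q powi (int t - int k))"
  proof (rule prod.cong[OF refl])
    fix t
    have "q powi (int t - int k) = q ^ t / q ^ k"
      using q by (simp add: power_int_diff)
    then show "(q ^ k - q ^ t) / q ^ k = 1 - q powi (int t - int k)"
      using q by (simp add: diff_divide_distrib)
  qed
  finally show ?thesis .
qed

lemma prob_FRS:
  fixes S :: "nat set"
  assumes S: "S \<subseteq> {..<NS}"
  shows "measure_pmf.prob (Pi_pmf {..<NS} (0\<^sub>v K) (\<lambda>_. pmf_of_set (carrier_vec K :: 'a::{field,finite} vec set)))
           {C. FRS K S C} = (\<Prod>t<K. 1 - real CARD('a) powi (int t - int (card S)))"
proof -
  define V where "V = (carrier_vec K :: 'a vec set)"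
  define PD where "PD = PiE_dflt S (0\<^sub>v K) (\<lambda>_. V)"
  define rS where "rS = (\<lambda>(C :: nat \<Rightarrow> 'a vec) i. if i \<in> S then C i else 0\<^sub>v K)"
  have finS: "finite S" using S finite_subset by blast
  have finV: "finite V" "V \<noteq> {}" unfolding V_def using finite_carrier_vec' zero_carrier_vec by blast+
  have pre: "rS -` {C. FRS K S C} = {C. FRS K S C}"
    unfolding rS_def FRS_def by auto
  have "measure_pmf.prob (Pi_pmf {..<NS} (0\<^sub>v K) (\<lambda>_. pmf_of_set V)) {C. FRS K S C}
      = measure_pmf.prob (map_pmf rS (Pi_pmf {..<NS} (0\<^sub>v K) (\<lambda>_. pmf_of_set V))) {C. FRS K S C}"
    by (simp only: measure_map_pmf pre)
  also have "map_pmf rS (Pi_pmf {..<NS} (0\<^sub>v K) (\<lambda>_. pmf_of_set V)) = Pi_pmf S (0\<^sub>v K) (\<lambda>_. pmf_of_set V)"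
    unfolding rS_def using Pi_pmf_subset[OF _ S, of "0\<^sub>v K" "\<lambda>_. pmf_of_set V"] by simp
  also have "\<dots> = pmf_of_set PD"
    unfolding PD_def using finS finV by (intro Pi_pmf_of_set) auto
  also have "measure_pmf.prob (pmf_of_set PD) {C. FRS K S C} = real (card (PD \<inter> {C. FRS K S C})) / real (card PD)"
    using finS finV unfolding PD_def by (intro measure_pmf_of_set) auto
  also have "card PD = card (Cols S K :: (nat \<Rightarrow> nat \<Rightarrow> 'a) set)"
    unfolding PD_def V_def by (rule bij_betw_same_card[OF colf_bij])
  also have "card (PD \<inter> {C. FRS K S C}) = card {cl \<in> (Cols S K :: (nat \<Rightarrow> nat \<Rightarrow> 'a) set). LI S K cl}"
  proof -
    have inj: "inj_on (colf K S) PD" using colf_bij unfolding PD_def V_def bij_betw_def by blast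
    have img: "colf K S ` PD = Cols S K" using colf_bij unfolding PD_def V_def bij_betw_def by blast
    have "colf K S ` (PD \<inter> {C. FRS K S C}) = {cl \<in> (Cols S K :: (nat \<Rightarrow> nat \<Rightarrow> 'a) set). LI S K cl}"
    proof (rule Set.set_eqI, rule iffI)
      fix cl assume "cl \<in> colf K S ` (PD \<inter> {C. FRS K S C})"
      then obtain C where C: "C \<in> PD" "FRS K S C" "cl = colf K S C" by blast
      then show "cl \<in> {cl \<in> Cols S K. LI S K cl}"
        using FRS_LI[of C S K] img unfolding PD_def V_def by auto
    next
      fix cl :: "nat \<Rightarrow> nat \<Rightarrow> 'a" assume "cl \<in> {cl \<in> Cols S K. LI S K cl}"
      then have cl: "cl \<in> Cols S K" "LI S K cl" by auto
      then obtain C where C: "C \<in> PD" "cl = colf K S C" using img by (metis imageE)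
      then have "FRS K S C" using FRS_LI[of C S K] cl unfolding PD_def V_def by auto
      then show "cl \<in> colf K S ` (PD \<inter> {C. FRS K S C})" using C by blast
    qed
    moreover have "card (colf K S ` (PD \<inter> {C. FRS K S C})) = card (PD \<inter> {C. FRS K S C})"
      using inj by (intro card_image) (auto intro: inj_on_subset)
    ultimately show ?thesis by simp
  qed
  also have "real (card {cl \<in> (Cols S K :: (nat \<Rightarrow> nat \<Rightarrow> 'a) set). LI S K cl}) / real (card (Cols S K :: (nat \<Rightarrow> nat \<Rightarrow> 'a) set))
      = (\<Prod>t<K. real CARD('a) ^ card S - real CARD('a) ^ t) / (real CARD('a) ^ card S) ^ K"
  proof -
    have a: "real (card {cl \<in> (Cols S K :: (nat \<Rightarrow> nat \<Rightarrow> 'a) set). LI S K cl}) = (\<Prod>t<K. real CARD('a) ^ card S - real CARD('a) ^ t)"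
      by (rule card_LI[OF finS])
    have b: "card (Cols S K :: (nat \<Rightarrow> nat \<Rightarrow> 'a) set) = (CARD('a) ^ card S) ^ K"
      by (rule card_Cols[OF finS])
    show ?thesis unfolding a b by simp
  qed
  also have "\<dots> = (\<Prod>t<K. 1 - real CARD('a) powi (int t - int (card S)))"
    by (rule prod_ratio) simp
  finally show ?thesis unfolding V_def .
qed



lemma Pi_pmf_unzip:
  assumes A: "finite A"
  shows "map_pmf (\<lambda>H. (fst \<circ> H, snd \<circ> H)) (Pi_pmf A (d1, d2) (\<lambda>i. pair_pmf (p i) (q i)))
         = pair_pmf (Pi_pmf A d1 p) (Pi_pmf A d2 q)"
proof (rule pmf_eqI)
  fix fg :: "('a \<Rightarrow> 'b) \<times> ('a \<Rightarrow> 'c)"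
  obtain f g where fg: "fg = (f, g)" by (cases fg)
  have inj: "inj (\<lambda>H :: 'a \<Rightarrow> 'b \<times> 'c. (fst \<circ> H, snd \<circ> H))"
    by (rule injI) (auto simp: fun_eq_iff prod_eq_iff)
  have e: "(f, g) = (\<lambda>H. (fst \<circ> H, snd \<circ> H)) (\<lambda>i. (f i, g i))" by (simp add: o_def)
  have "pmf (map_pmf (\<lambda>H. (fst \<circ> H, snd \<circ> H)) (Pi_pmf A (d1, d2) (\<lambda>i. pair_pmf (p i) (q i)))) fg
      = pmf (Pi_pmf A (d1, d2) (\<lambda>i. pair_pmf (p i) (q i))) (\<lambda>i. (f i, g i))"
    unfolding fg by (subst e, rule pmf_map_inj'[OF inj])
  also have "\<dots> = pmf (pair_pmf (Pi_pmf A d1 p) (Pi_pmf A d2 q)) fg"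
    unfolding fg pmf_pair using A by (auto simp: pmf_Pi pmf_pair prod.distrib)
  finally show "pmf (map_pmf (\<lambda>H. (fst \<circ> H, snd \<circ> H)) (Pi_pmf A (d1, d2) (\<lambda>i. pair_pmf (p i) (q i)))) fg
      = pmf (pair_pmf (Pi_pmf A d1 p) (Pi_pmf A d2 q)) fg" .
qed

lemma Pi_pmf_curry:
  assumes A: "finite A" and B: "finite B"
  shows "map_pmf (\<lambda>F (j, i). F i j) (Pi_pmf A (\<lambda>_. d) (\<lambda>i. Pi_pmf B d (\<lambda>j. p j i)))
         = Pi_pmf (B \<times> A) d (\<lambda>(j, i). p j i)"
proof (rule pmf_eqI)
  fix G :: "'b \<times> 'a \<Rightarrow> 'c"
  have inj: "inj (\<lambda>(F :: 'a \<Rightarrow> 'b \<Rightarrow> 'c) (j, i). F i j)"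
  proof (rule injI)
    fix F1 F2 :: "'a \<Rightarrow> 'b \<Rightarrow> 'c" assume "(\<lambda>(j, i). F1 i j) = (\<lambda>(j, i). F2 i j)"
    then have "F1 i j = F2 i j" for i j by (metis (mono_tags) case_prod_conv)
    then show "F1 = F2" by (simp add: fun_eq_iff)
  qed
  have e: "G = (\<lambda>F (j, i). F i j) (\<lambda>i j. G (j, i))" by (simp add: fun_eq_iff)
  have "pmf (map_pmf (\<lambda>F (j, i). F i j) (Pi_pmf A (\<lambda>_. d) (\<lambda>i. Pi_pmf B d (\<lambda>j. p j i)))) G
      = pmf (Pi_pmf A (\<lambda>_. d) (\<lambda>i. Pi_pmf B d (\<lambda>j. p j i))) (\<lambda>i j. G (j, i))"
    by (subst e, rule pmf_map_inj'[OF inj])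
  also have "\<dots> = (if \<forall>i. i \<notin> A \<longrightarrow> (\<lambda>j. G (j, i)) = (\<lambda>_. d)
                   then \<Prod>i\<in>A. (if \<forall>j. j \<notin> B \<longrightarrow> G (j, i) = d then \<Prod>j\<in>B. pmf (p j i) (G (j, i)) else 0)
                   else 0)"
    by (simp only: pmf_Pi[OF A] pmf_Pi[OF B])
  also have "\<dots> = pmf (Pi_pmf (B \<times> A) d (\<lambda>(j, i). p j i)) G"
  proof (cases "\<forall>x. x \<notin> B \<times> A \<longrightarrow> G x = d")
    case True
    have c1: "\<forall>i. i \<notin> A \<longrightarrow> (\<lambda>j. G (j, i)) = (\<lambda>_. d)" using True by (auto simp: fun_eq_iff)
    have c2: "\<forall>j. j \<notin> B \<longrightarrow> G (j, i) = d" if "i \<in> A" for i using True that by auto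
    have "(if \<forall>i. i \<notin> A \<longrightarrow> (\<lambda>j. G (j, i)) = (\<lambda>_. d)
                   then \<Prod>i\<in>A. (if \<forall>j. j \<notin> B \<longrightarrow> G (j, i) = d then \<Prod>j\<in>B. pmf (p j i) (G (j, i)) else 0)
                   else 0) = (\<Prod>i\<in>A. \<Prod>j\<in>B. pmf (p j i) (G (j, i)))"
      using c1 c2 by (subst if_P[OF c1]) (intro prod.cong refl, simp)
    also have "\<dots> = (\<Prod>j\<in>B. \<Prod>i\<in>A. pmf (p j i) (G (j, i)))"
      by (rule prod.swap)
    also have "\<dots> = (\<Prod>x\<in>B \<times> A. pmf ((\<lambda>(j, i). p j i) x) (G x))"
      by (simp add: prod.cartesian_product case_prod_unfold)
    also have "\<dots> = pmf (Pi_pmf (B \<times> A) d (\<lambda>(j, i). p j i)) G"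
      using True A B by (intro pmf_Pi'[symmetric]) auto
    finally show ?thesis .
  next
    case False
    then obtain j i where ji: "(j, i) \<notin> B \<times> A" "G (j, i) \<noteq> d" by auto
    have rhs: "pmf (Pi_pmf (B \<times> A) d (\<lambda>(j, i). p j i)) G = 0"
      unfolding pmf_Pi[OF finite_cartesian_product[OF B A]] using ji by auto
    show ?thesis
    proof (cases "i \<in> A")
      case True
      then have "j \<notin> B" using ji by auto
      then have "(if \<forall>j. j \<notin> B \<longrightarrow> G (j, i) = d then \<Prod>j\<in>B. pmf (p j i) (G (j, i)) else 0) = 0"
        using ji by auto
      then have "(\<Prod>i\<in>A. (if \<forall>j. j \<notin> B \<longrightarrow> G (j, i) = d then \<Prod>j\<in>B. pmf (p j i) (G (j, i)) else 0)) = 0"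
        using True A by (intro prod_zero) blast+
      then show ?thesis using rhs by simp
    next
      case False
      then have nc: "\<not> (\<forall>i. i \<notin> A \<longrightarrow> (\<lambda>j. G (j, i)) = (\<lambda>_. d))" using ji by (auto simp: fun_eq_iff)
      show ?thesis unfolding rhs if_not_P[OF nc] ..
    qed
  qed
  finally show "pmf (map_pmf (\<lambda>F (j, i). F i j) (Pi_pmf A (\<lambda>_. d) (\<lambda>i. Pi_pmf B d (\<lambda>j. p j i)))) G
      = pmf (Pi_pmf (B \<times> A) d (\<lambda>(j, i). p j i)) G" .
qed

lemma bool_pmf_eqI:
  fixes p q :: "bool pmf"
  assumes "pmf p False = pmf q False"
  shows "p = q"
proof (rule pmf_eqI)
  fix b :: bool show "pmf p b = pmf q b"
    using assms by (cases b) (simp_all add: pmf_False_conv_True)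
qed

lemma bern_exists:
  fixes L :: nat
  assumes "\<And>j. j < L \<Longrightarrow> 0 \<le> b j \<and> b j \<le> 1"
  shows "map_pmf (\<lambda>y. \<exists>j<L. y j) (Pi_pmf {..<L} False (\<lambda>j. bernoulli_pmf (b j)))
         = bernoulli_pmf (1 - (\<Prod>j<L. 1 - b j))"
proof (rule bool_pmf_eqI)
  have pre: "(\<lambda>y. \<exists>j<L. y j) -` {False} = Pi {..<L} (\<lambda>_. {False})" by auto
  have "pmf (map_pmf (\<lambda>y. \<exists>j<L. y j) (Pi_pmf {..<L} False (\<lambda>j. bernoulli_pmf (b j)))) False
      = measure_pmf.prob (Pi_pmf {..<L} False (\<lambda>j. bernoulli_pmf (b j))) (Pi {..<L} (\<lambda>_. {False}))"
    by (simp add: pmf_map pre)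
  also have "\<dots> = (\<Prod>j<L. 1 - b j)"
    using assms by (subst measure_Pi_pmf_Pi[OF finite_lessThan]) (auto simp: measure_pmf_single intro!: prod.cong)
  also have "\<dots> = pmf (bernoulli_pmf (1 - (\<Prod>j<L. 1 - b j))) False"
  proof -
    have "0 \<le> (\<Prod>j<L. 1 - b j)" using assms by (intro prod_nonneg) auto
    moreover have "(\<Prod>j<L. 1 - b j) \<le> 1" using assms by (intro prod_le_1) auto
    ultimately show ?thesis by simp
  qed
  finally show "pmf (map_pmf (\<lambda>y. \<exists>j<L. y j) (Pi_pmf {..<L} False (\<lambda>j. bernoulli_pmf (b j)))) False
      = pmf (bernoulli_pmf (1 - (\<Prod>j<L. 1 - b j))) False" .
qed

lemma bern_or:
  assumes "0 \<le> a" "a \<le> 1" "0 \<le> c" "c \<le> 1"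
  shows "map_pmf (\<lambda>(x, z). x \<or> z) (pair_pmf (bernoulli_pmf a) (bernoulli_pmf c))
         = bernoulli_pmf (1 - (1 - a) * (1 - c))"
proof (rule bool_pmf_eqI)
  have pre: "(\<lambda>(x, z). x \<or> z) -` {False} = {False} \<times> {False}" by auto
  have "pmf (map_pmf (\<lambda>(x, z). x \<or> z) (pair_pmf (bernoulli_pmf a) (bernoulli_pmf c))) False
      = (1 - a) * (1 - c)"
    using assms by (simp add: pmf_map pre measure_pmf_prob_product measure_pmf_single pmf_pair)
  also have "\<dots> = pmf (bernoulli_pmf (1 - (1 - a) * (1 - c))) False"
  proof -
    have "0 \<le> (1 - a) * (1 - c)" "(1 - a) * (1 - c) \<le> 1" using assms by (auto intro: mult_le_one)
    then show ?thesis by simp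
  qed
  finally show "pmf (map_pmf (\<lambda>(x, z). x \<or> z) (pair_pmf (bernoulli_pmf a) (bernoulli_pmf c))) False
      = pmf (bernoulli_pmf (1 - (1 - a) * (1 - c))) False" .
qed


lemma S_dist:
  fixes L NS :: nat and a :: real and b :: "nat \<Rightarrow> real"
  assumes a: "0 \<le> a" "a \<le> 1" and b: "\<And>j. j < L \<Longrightarrow> 0 \<le> b j \<and> b j \<le> 1"
  shows "map_pmf (\<lambda>(rSD, rSR). \<lambda>i. rSD i \<or> (\<exists>j<L. rSR (j, i)))
           (pair_pmf (Pi_pmf {..<NS} False (\<lambda>_. bernoulli_pmf a))
                     (Pi_pmf ({..<L} \<times> {..<NS}) False (\<lambda>(j, i). bernoulli_pmf (b j))))
         = Pi_pmf {..<NS} False (\<lambda>_. bernoulli_pmf (1 - (1 - a) * (\<Prod>j<L. 1 - b j)))"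
proof -
  define T where "T = Pi_pmf {..<NS} (\<lambda>_. False) (\<lambda>i. Pi_pmf {..<L} False (\<lambda>j. bernoulli_pmf (b j)))"
  define P where "P = Pi_pmf {..<NS} (False, \<lambda>_. False)
                        (\<lambda>i. pair_pmf (bernoulli_pmf a) (Pi_pmf {..<L} False (\<lambda>j. bernoulli_pmf (b j))))"
  define g where "g = (\<lambda>(x :: bool, y :: nat \<Rightarrow> bool). x \<or> (\<exists>j<L. y j))"
  have 1: "Pi_pmf ({..<L} \<times> {..<NS}) False (\<lambda>(j, i). bernoulli_pmf (b j)) = map_pmf (\<lambda>F (j, i). F i j) T"
    unfolding T_def using Pi_pmf_curry[of "{..<NS}" "{..<L}" False "\<lambda>j i. bernoulli_pmf (b j)"] by simp
  have 2: "pair_pmf (Pi_pmf {..<NS} False (\<lambda>_. bernoulli_pmf a)) T = map_pmf (\<lambda>H. (fst \<circ> H, snd \<circ> H)) P"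
    unfolding T_def P_def by (rule Pi_pmf_unzip[symmetric]) simp
  have "map_pmf (\<lambda>(rSD, rSR). \<lambda>i. rSD i \<or> (\<exists>j<L. rSR (j, i)))
           (pair_pmf (Pi_pmf {..<NS} False (\<lambda>_. bernoulli_pmf a))
                     (Pi_pmf ({..<L} \<times> {..<NS}) False (\<lambda>(j, i). bernoulli_pmf (b j))))
        = map_pmf (\<lambda>H. g \<circ> H) P"
    unfolding 1 pair_map_pmf2 2 map_pmf_comp
    by (intro map_pmf_cong refl) (auto simp: g_def fun_eq_iff)
  also have "\<dots> = Pi_pmf {..<NS} False (\<lambda>i. map_pmf g (pair_pmf (bernoulli_pmf a) (Pi_pmf {..<L} False (\<lambda>j. bernoulli_pmf (b j)))))"
    unfolding P_def by (rule Pi_pmf_map[symmetric]) (auto simp: g_def)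
  also have "map_pmf g (pair_pmf (bernoulli_pmf a) (Pi_pmf {..<L} False (\<lambda>j. bernoulli_pmf (b j))))
      = map_pmf (\<lambda>(x, z). x \<or> z) (pair_pmf (bernoulli_pmf a) (map_pmf (\<lambda>y. \<exists>j<L. y j) (Pi_pmf {..<L} False (\<lambda>j. bernoulli_pmf (b j)))))"
    unfolding pair_map_pmf2 map_pmf_comp g_def by (intro map_pmf_cong refl) auto
  also have "\<dots> = map_pmf (\<lambda>(x, z). x \<or> z) (pair_pmf (bernoulli_pmf a) (bernoulli_pmf (1 - (\<Prod>j<L. 1 - b j))))"
    by (subst bern_exists[of L b]) (use b in auto)
  also have "\<dots> = bernoulli_pmf (1 - (1 - a) * (1 - (1 - (\<Prod>j<L. 1 - b j))))"
  proof (rule bern_or[OF a])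
    have "0 \<le> (\<Prod>j<L. 1 - b j)" using b by (intro prod_nonneg) auto
    moreover have "(\<Prod>j<L. 1 - b j) \<le> 1" using b by (intro prod_le_1) auto
    ultimately show "0 \<le> 1 - (\<Prod>j<L. 1 - b j)" "1 - (\<Prod>j<L. 1 - b j) \<le> 1" by auto
  qed
  finally show ?thesis by simp
qed



context vec_space begin
lemma rank_low_nondistinct:
  assumes "A \<in> carrier_mat n nc" and "\<not> distinct (cols A)"
  shows "rank A < nc"
proof -
  obtain S where "maximal S (\<lambda>T. T \<subseteq> set (cols A) \<and> lin_indpt T)"
    using maximal_exists[of "(\<lambda>T. T \<subseteq> set (cols A) \<and> lin_indpt T)" "card (set (cols A))" "{}"]
    by (meson List.finite_set card_mono empty_iff empty_subsetI finite_lin_indpt2 rev_finite_subset)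
  then have "card S \<le> card (set (cols A))" by (simp add: card_mono maximal_def)
  then have "card S < nc"
    using assms(1) cols_length card_length \<open>\<not> distinct (cols A)\<close> card_distinct carrier_matD(2) nat_less_le
    by (metis dual_order.antisym dual_order.trans)
  then show ?thesis
    using rank_card_indpt[OF \<open>A \<in> carrier_mat n nc\<close> \<open>maximal S (\<lambda>T. T \<subseteq> set (cols A) \<and> lin_indpt T)\<close>]
    by simp
qed
end

lemma rank_full_kernel:
  fixes A :: "'a::field mat"
  assumes A: "A \<in> carrier_mat n nc" and r: "vec_space.rank n A = nc"
    and v: "v \<in> carrier_vec nc" and Av: "A *\<^sub>v v = 0\<^sub>v n"
  shows "v = 0\<^sub>v nc"
proof (rule ccontr)
  assume nz: "v \<noteq> 0\<^sub>v nc"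
  have d: "distinct (cols A)" using vec_space.rank_low_nondistinct[OF A] r by force
  show False
    using vec_space.full_rank_lin_indpt[OF A r d] vec_space.lin_depI[OF A v nz Av d] by blast
qed

lemma kernel_rows:
  assumes "\<And>r. r \<in> set rs \<Longrightarrow> r \<in> carrier_vec K \<and> r \<bullet> x = 0"
  shows "mat_of_rows K rs *\<^sub>v x = 0\<^sub>v (length rs)"
proof (rule eq_vecI)
  fix i assume "i < dim_vec (0\<^sub>v (length rs) :: 'a vec)"
  then have i: "i < length rs" by simp
  then have "rs ! i \<in> set rs" by simp
  then show "(mat_of_rows K rs *\<^sub>v x) $ i = 0\<^sub>v (length rs) $ i"
    using assms[of "rs ! i"] i by simp
qed simp

definition FR :: "nat \<Rightarrow> nat \<Rightarrow> (nat \<Rightarrow> 'a::field vec) \<Rightarrow> (nat \<Rightarrow> bool) \<Rightarrow> bool" where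
  "FR K NS C s = (\<forall>x\<in>carrier_vec K. (\<forall>i<NS. s i \<longrightarrow> C i \<bullet> x = 0) \<longrightarrow> x = 0\<^sub>v K)"

lemma relay_det:
  fixes C :: "nat \<Rightarrow> 'a::field vec"
  assumes Cc: "\<And>i. i < NS \<Longrightarrow> C i \<in> carrier_vec K"
    and CR: "CR = (\<lambda>j. mat_of_rows K (map C (filter (\<lambda>i. rSR (j, i)) [0..<NS])))"
    and Gc: "\<And>j. j < L \<Longrightarrow> G j \<in> carrier_mat NR (dim_row (CR j))"
    and rk: "mat_rank (mat_of_rows K (map C (filter rSD [0..<NS]) @
                concat (map (\<lambda>j. map (\<lambda>r. row (G j * CR j) r) (filter (\<lambda>r. rRD (j, r)) [0..<NR])) [0..<L]))) = K"
  shows "FR K NS C (\<lambda>i. rSD i \<or> (\<exists>j<L. rSR (j, i)))"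
  unfolding FR_def
proof (intro ballI impI)
  fix x :: "'a vec" assume x: "x \<in> carrier_vec K"
  assume orth: "\<forall>i<NS. (rSD i \<or> (\<exists>j<L. rSR (j, i))) \<longrightarrow> C i \<bullet> x = 0"
  define rs where "rs = map C (filter rSD [0..<NS]) @
                concat (map (\<lambda>j. map (\<lambda>r. row (G j * CR j) r) (filter (\<lambda>r. rRD (j, r)) [0..<NR])) [0..<L])"
  have CRx: "CR j *\<^sub>v x = 0\<^sub>v (dim_row (CR j))" if j: "j < L" for j
    unfolding CR apply (simp only: mat_of_rows_carrier)
    by (rule kernel_rows) (use orth Cc j in auto)
  have "r \<in> carrier_vec K \<and> r \<bullet> x = 0" if "r \<in> set rs" for r
  proof -
    from that consider (a) "r \<in> set (map C (filter rSD [0..<NS]))"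
      | (b) j rr where "j < L" "rr < NR" "r = row (G j * CR j) rr"
      unfolding rs_def by auto
    then show ?thesis
    proof cases
      case a then show ?thesis using orth Cc by auto
    next
      case b
      have Gj: "G j \<in> carrier_mat NR (dim_row (CR j))" using Gc b(1) by blast
      have CRj: "CR j \<in> carrier_mat (dim_row (CR j)) K" unfolding CR using mat_of_rows_carrier(1)[of K "map C (filter (\<lambda>i. rSR (j, i)) [0..<NS])"] by simp
      have GC: "G j * CR j \<in> carrier_mat NR K" using Gj CRj by (rule mult_carrier_mat)
      have "r \<bullet> x = ((G j * CR j) *\<^sub>v x) $ rr" using b GC by (simp only: index_mult_mat_vec carrier_matD)
      also have "\<dots> = (G j *\<^sub>v (CR j *\<^sub>v x)) $ rr" using Gj CRj x by (simp only: assoc_mult_mat_vec)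
      also have "\<dots> = 0" using CRx[OF b(1)] Gj b(2) by auto
      finally show ?thesis using b GC by auto
    qed
  qed
  then have "mat_of_rows K rs *\<^sub>v x = 0\<^sub>v (length rs)" by (rule kernel_rows)
  moreover have "vec_space.rank (length rs) (mat_of_rows K rs) = K"
    using rk unfolding rs_def[symmetric] mat_rank_def by simp
  ultimately show "x = 0\<^sub>v K"
    using rank_full_kernel[OF mat_of_rows_carrier(1) _ x] by blast
qed



lemma pmf_bind_mono:
  assumes "\<And>x. x \<in> set_pmf p \<Longrightarrow> pmf (f x) b \<le> pmf (g x) b"
  shows "pmf (bind_pmf p f) b \<le> pmf (bind_pmf p g) b"
  unfolding pmf_bind
  by (rule integral_mono_AE)
     (auto intro!: measure_pmf.integrable_const_bound[where B=1] AE_pmfI assms simp: pmf_le_1)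

lemma pmf_bind_bound:
  assumes "\<And>x. x \<in> set_pmf p \<Longrightarrow> pmf (f x) b \<le> c"
  shows "pmf (bind_pmf p f) b \<le> c"
proof -
  have "pmf (bind_pmf p f) b \<le> measure_pmf.expectation p (\<lambda>_. c)"
    unfolding pmf_bind
    by (rule integral_mono_AE)
       (auto intro!: measure_pmf.integrable_const_bound[where B=1] AE_pmfI assms simp: pmf_le_1)
  then show ?thesis by simp
qed

lemma set_pmf_Pi_of_set:
  assumes "finite A" "x \<in> A" "\<And>x. x \<in> A \<Longrightarrow> finite (B x)" "\<And>x. x \<in> A \<Longrightarrow> B x \<noteq> {}"
    and "f \<in> set_pmf (Pi_pmf A d (\<lambda>x. pmf_of_set (B x)))"
  shows "f x \<in> B x"
  using assms by (auto simp: set_Pi_pmf PiE_dflt_def)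


lemma carrier_mat_ne: "(carrier_mat n m :: 'a::zero mat set) \<noteq> {}"
  using zero_carrier_mat by blast

lemma step1:
  "pmf (relay_success_pmf TYPE('a::{field,finite}) K L NS NR eSD eSR eRD) True \<le>
   pmf (bind_pmf (Pi_pmf {..<NS} (0\<^sub>v K) (\<lambda>_. pmf_of_set (carrier_vec K :: 'a vec set))) (\<lambda>C.
        bind_pmf (Pi_pmf {..<NS} False (\<lambda>_. bernoulli_pmf (1 - eSD))) (\<lambda>rSD.
        bind_pmf (Pi_pmf ({..<L} \<times> {..<NS}) False (\<lambda>(j,i). bernoulli_pmf (1 - eSR j))) (\<lambda>rSR.
        return_pmf (FR K NS C (\<lambda>i. rSD i \<or> (\<exists>j<L. rSR (j, i)))))))) True"
  unfolding relay_success_pmf_def Let_def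
  apply (intro pmf_bind_mono)
  subgoal premises prems for C rSD rSR
  proof (cases "FR K NS C (\<lambda>i. rSD i \<or> (\<exists>j<L. rSR (j, i)))")
    case True then show ?thesis by (simp add: pmf_le_1)
  next
    case False
    have Cc: "C i \<in> carrier_vec K" if "i < NS" for i
      by (rule set_pmf_Pi_of_set[OF _ _ _ _ prems(1)]; (use that finite_carrier_vec' zero_carrier_vec in blast)+)
    show ?thesis
      apply (rule order.trans[OF _ pmf_nonneg])
      apply (intro pmf_bind_bound)
      subgoal premises p2 for G rRD
      proof -
        have Gc: "G j \<in> carrier_mat NR (dim_row (mat_of_rows K (map C (filter (\<lambda>i. rSR (j, i)) [0..<NS]))))"
          if "j < L" for j
          by (rule set_pmf_Pi_of_set[OF _ _ _ _ p2(1)]) (use that finite_carrier_mat' carrier_mat_ne in auto)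
        show ?thesis using relay_det[OF Cc refl Gc] False by (auto simp: indicator_def)
      qed
      done
  qed
  done


theorem proposition2:
  fixes K L NS NR :: nat and eSD :: real and eSR eRD :: "nat \<Rightarrow> real"
  assumes "K \<ge> 1" and "L \<ge> 1" and "NS \<ge> K" and "NR \<ge> 1"
    and "0 \<le> eSD" and "eSD \<le> 1"
    and "\<And>j. j < L \<Longrightarrow> 0 \<le> eSR j \<and> eSR j \<le> 1"
    and "\<And>j. j < L \<Longrightarrow> 0 \<le> eRD j \<and> eRD j \<le> 1"
  shows "pmf (relay_success_pmf TYPE('a::{field,finite}) K L NS NR eSD eSR eRD) True
           \<le> P_decode CARD('a) K NS (eSD * (\<Prod>j<L. eSR j))"
proof -
  note eSD = assms(5,6) and eSR = assms(7)
  define Cd where "Cd = Pi_pmf {..<NS} (0\<^sub>v K) (\<lambda>_. pmf_of_set (carrier_vec K :: 'a vec set))"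
  define SDd where "SDd = Pi_pmf {..<NS} False (\<lambda>_. bernoulli_pmf (1 - eSD))"
  define SRd where "SRd = Pi_pmf ({..<L} \<times> {..<NS}) False (\<lambda>(j,i). bernoulli_pmf (1 - eSR j))"
  define sf where "sf = (\<lambda>(rSD :: nat \<Rightarrow> bool) (rSR :: nat \<times> nat \<Rightarrow> bool) i. rSD i \<or> (\<exists>j<L. rSR (j, i)))"
  define e where "e = eSD * (\<Prod>j<L. eSR j)"
  define B where "B = (\<lambda>k::nat. \<Prod>t<K. 1 - real CARD('a) powi (int t - int k))"
  have e01: "0 \<le> e" "e \<le> 1"
  proof -
    have "0 \<le> (\<Prod>j<L. eSR j)" "(\<Prod>j<L. eSR j) \<le> 1" using eSR by (auto intro: prod_nonneg prod_le_1)
    then show "0 \<le> e" "e \<le> 1" unfolding e_def using eSD by (auto intro: mult_le_one)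
  qed
  have s1: "pmf (relay_success_pmf TYPE('a) K L NS NR eSD eSR eRD) True \<le>
     pmf (bind_pmf Cd (\<lambda>C. bind_pmf SDd (\<lambda>rSD. bind_pmf SRd (\<lambda>rSR. return_pmf (FR K NS C (sf rSD rSR)))))) True"
    using step1[where 'a='a, of K L NS NR eSD eSR eRD] unfolding Cd_def SDd_def SRd_def sf_def by simp
  have Qeq: "bind_pmf Cd (\<lambda>C. bind_pmf SDd (\<lambda>rSD. bind_pmf SRd (\<lambda>rSR. return_pmf (FR K NS C (sf rSD rSR)))))
      = bind_pmf (map_pmf (\<lambda>(rSD, rSR). sf rSD rSR) (pair_pmf SDd SRd)) (\<lambda>s. map_pmf (\<lambda>C. FR K NS C s) Cd)"
  proof -
    have "bind_pmf Cd (\<lambda>C. bind_pmf SDd (\<lambda>rSD. bind_pmf SRd (\<lambda>rSR. return_pmf (FR K NS C (sf rSD rSR)))))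
        = bind_pmf SDd (\<lambda>rSD. bind_pmf Cd (\<lambda>C. bind_pmf SRd (\<lambda>rSR. return_pmf (FR K NS C (sf rSD rSR)))))"
      by (rule bind_commute_pmf)
    also have "\<dots> = bind_pmf SDd (\<lambda>rSD. bind_pmf SRd (\<lambda>rSR. bind_pmf Cd (\<lambda>C. return_pmf (FR K NS C (sf rSD rSR)))))"
      by (rule bind_pmf_cong[OF refl], rule bind_commute_pmf)
    also have "\<dots> = bind_pmf (map_pmf (\<lambda>(rSD, rSR). sf rSD rSR) (pair_pmf SDd SRd)) (\<lambda>s. map_pmf (\<lambda>C. FR K NS C s) Cd)"
      by (simp add: pair_pmf_def map_pmf_def bind_assoc_pmf bind_return_pmf)
    finally show ?thesis .
  qed
  have Sd: "map_pmf (\<lambda>(rSD, rSR). sf rSD rSR) (pair_pmf SDd SRd) = Pi_pmf {..<NS} False (\<lambda>_. bernoulli_pmf (1 - e))"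
  proof -
    have "map_pmf (\<lambda>(rSD, rSR). sf rSD rSR) (pair_pmf SDd SRd)
        = Pi_pmf {..<NS} False (\<lambda>_. bernoulli_pmf (1 - (1 - (1 - eSD)) * (\<Prod>j<L. 1 - (1 - eSR j))))"
      unfolding sf_def SDd_def SRd_def
      by (rule S_dist[of "1 - eSD" L "\<lambda>j. 1 - eSR j" NS]) (use eSD eSR in auto)
    then show ?thesis unfolding e_def by simp
  qed
  have inner: "pmf (map_pmf (\<lambda>C. FR K NS C s) Cd) True = B (card {i \<in> {..<NS}. s i})" for s
  proof -
    have pre: "(\<lambda>C. FR K NS C s) -` {True} = {C. FRS K {i \<in> {..<NS}. s i} C}"
      unfolding FR_def FRS_def by auto
    show ?thesis unfolding pmf_map pre Cd_def B_def
      by (rule prob_FRS) auto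
  qed
  have "pmf (bind_pmf Cd (\<lambda>C. bind_pmf SDd (\<lambda>rSD. bind_pmf SRd (\<lambda>rSR. return_pmf (FR K NS C (sf rSD rSR)))))) True
      = measure_pmf.expectation (Pi_pmf {..<NS} False (\<lambda>_. bernoulli_pmf (1 - e))) (\<lambda>s. B (card {i \<in> {..<NS}. s i}))"
    unfolding Qeq Sd pmf_bind inner ..
  also have "\<dots> = measure_pmf.expectation (binomial_pmf NS (1 - e)) B"
    using binomial_pmf_altdef'[of "{..<NS}" NS "1 - e" False] e01 by simp
  also have "\<dots> = (\<Sum>k\<le>NS. real (NS choose k) * (1 - e) ^ k * e ^ (NS - k) * B k)"
    using e01 by (subst expectation_binomial_pmf') auto
  also have "\<dots> = (\<Sum>k=K..NS. real (NS choose k) * (1 - e) ^ k * e ^ (NS - k) * B k)"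
  proof (rule sum.mono_neutral_right)
    show "\<forall>k\<in>{..NS} - {K..NS}. real (NS choose k) * (1 - e) ^ k * e ^ (NS - k) * B k = 0"
    proof
      fix k assume "k \<in> {..NS} - {K..NS}"
      then have k: "k < K" by auto
      have "B k = 0" unfolding B_def using k by (intro prod_zero) (auto intro!: bexI[of _ k])
      then show "real (NS choose k) * (1 - e) ^ k * e ^ (NS - k) * B k = 0" by simp
    qed
  qed auto
  also have "\<dots> = P_decode CARD('a) K NS e"
    unfolding P_decode_def B_def ..
  finally show ?thesis using s1 unfolding e_def by simp
qed


end
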